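(* Let $(M,\mathbf{p})$ be a projective manifold of dimension $n+1$ and let $\nabla\in\mathbf{p}$. (a) The differential operator $\mathcal{D}^{\mathrm{sym}}:\Gamma(TM)\to\Gamma((S^2T^*M\otimes TM)_\circ)$, $$\mathcal{D}^{\mathrm{sym}}:\xi^c\mapsto(\nabla_{(a}\nabla_{b)}\xi^c+\mathsf{P}_{(ab)}\xi^c+W_{d(a}{}^c{}_{b)}\xi^d)_\circ=\mathcal{D}^{\mathcal{A}}(\xi)_a{}^c{}_b+W_{d(a}{}^c{}_{b)}\xi^d,$$ where $(\cdot)_\circ$ denotes the totally trace-free part, is projectively invariant, i.e. independent of the choice of $\nabla\in\mathbf{p}$. (b) A vector field $\xi\in\Gamma(TM)$ is a projective symmetry of $\mathbf{p}$ if and only if $\mathcal{D}^{\mathrm{sym}}(\xi)=0$. In particular, a solution $\xi$ of $\mathcal{D}^{\mathcal{A}}(\xi)=0$ is a projective symmetry if and only if $W_{d(a}{}^c{}_{b)}\xi^d=0$, and a normal solution $\xi$ of $\mathcal{D}^{\mathcal{A}}(\xi)=0$ is a projective symmetry if and only if $W_{da}{}^c{}_b\xi^d=0$.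
   Context: A projective structure $\mathbf{p}$ is a class of torsion-free connections with the same unparametrised geodesics. For $\nabla\in\mathbf{p}$: $R_{ab}{}^c{}_d\xi^d=(\nabla_a\nabla_b-\nabla_b\nabla_a)\xi^c$, $\mathrm{Ric}_{bd}=R_{cb}{}^c{}_d$, $\mathsf{P}_{ab}=\frac{1}{n(n+2)}[(n+1)\mathrm{Ric}_{ab}+\mathrm{Ric}_{ba}]$, projective Weyl tensor $W$ defined by $R_{ab}{}^c{}_d=W_{ab}{}^c{}_d+2\delta^c{}_{[a}\mathsf{P}_{b]d}-2\mathsf{P}_{[ab]}\delta^c{}_d$, projective Cotton tensor $C_{abc}=\nabla_a\mathsf{P}_{bc}-\nabla_b\mathsf{P}_{ac}$. The operator $\mathcal{D}^{\mathcal{A}}:\Gamma(TM)\to\Gamma((S^2T^*M\otimes TM)_\circ)$ is $\xi^a\mapsto\nabla_{(b}\nabla_{c)}\xi^a+\mathsf{P}_{(bc)}\xi^a-\frac{1}{n+2}[(\nabla_{(b}\nabla_{d)}\xi^d+\mathsf{P}_{(bd)}\xi^d)\delta^a{}_c+(\nabla_{(c}\nabla_{d)}\xi^d+\mathsf{P}_{(cd)}\xi^d)\delta^a{}_b]$; it is projectively invariant. A solution $\xi$ of $\mathcal{D}^{\mathcal{A}}\xi=0$ is called normal if it is the projecting part of a section of the adjoint tractor bundle (trace-free endomorphisms of the projective tractor bundle) parallel for the normal tractor connection; equivalently, if additionally $W_{ab}{}^c{}_d\xi^d=0$ and $C_{abd}\xi^d=0$. A vector field is a projective symmetry of $\mathbf{p}$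 if its local flow preserves $\mathbf{p}$, i.e. the trace-free part of the Lie derivative $\mathcal{L}_\xi\nabla$ vanishes. *)

theory Defs
  imports "HOL-Analysis.Analysis"
begin

text \<open>Local-coordinate rendering. Points are x :: real^'n on an open set U, dim = CARD('n) = n+1.
  A connection is given by Christoffel symbols: Gam x a b c = Gamma^c_{ab},
  with nabla_a xi^c = d_a xi^c + Gamma^c_{ab} xi^b.  Tensors are functions of their indices,
  upper index listed in the position where the paper writes it.\<close>

definition kd :: "'n \<Rightarrow> 'n \<Rightarrow> real" where
  "kd i j = (if i = j then 1 else 0)"

definition pd :: "'n::finite \<Rightarrow> (real^'n \<Rightarrow> real) \<Rightarrow> real^'n \<Rightarrow> real" where
  "pd a f x = deriv (\<lambda>t. f (x + t *\<^sub>R axis a 1)) 0"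

fun pds :: "'n::finite list \<Rightarrow> (real^'n \<Rightarrow> real) \<Rightarrow> real^'n \<Rightarrow> real" where
  "pds [] f = f"
| "pds (a # as) f = pd a (pds as f)"

definition smooth_fun :: "(real^'n::finite) set \<Rightarrow> (real^'n \<Rightarrow> real) \<Rightarrow> bool" where
  "smooth_fun U f \<longleftrightarrow> (\<forall>as. continuous_on U (pds as f) \<and>
      (\<forall>x\<in>U. \<forall>a. (\<lambda>t. pds as f (x + t *\<^sub>R axis a 1)) differentiable (at 0)))"

type_synonym 'n conn = "real^'n \<Rightarrow> 'n \<Rightarrow> 'n \<Rightarrow> 'n \<Rightarrow> real"

definition torsion_free :: "(real^'n::finite) set \<Rightarrow> 'n conn \<Rightarrow> bool" where
  "torsion_free U Gam \<longleftrightarrow> (\<forall>x\<in>U. \<forall>a b c. Gam x a b c = Gam x b a c)"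

definition smooth_conn :: "(real^'n::finite) set \<Rightarrow> 'n conn \<Rightarrow> bool" where
  "smooth_conn U Gam \<longleftrightarrow> (\<forall>a b c. smooth_fun U (\<lambda>x. Gam x a b c))"

definition smooth_vf :: "(real^'n::finite) set \<Rightarrow> (real^'n \<Rightarrow> real^'n) \<Rightarrow> bool" where
  "smooth_vf U xi \<longleftrightarrow> (\<forall>c. smooth_fun U (\<lambda>x. xi x $ c))"

definition projchange :: "'n::finite conn \<Rightarrow> (real^'n \<Rightarrow> 'n \<Rightarrow> real) \<Rightarrow> 'n conn" where
  "projchange Gam Ups x a b c = Gam x a b c + kd c a * Ups x b + kd c b * Ups x a"

definition nab1 :: "'n::finite conn \<Rightarrow> (real^'n \<Rightarrow> real^'n) \<Rightarrow> real^'n \<Rightarrow> 'n \<Rightarrow> 'n \<Rightarrow> real" where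
  "nab1 Gam xi x b c = pd b (\<lambda>y. xi y $ c) x + (\<Sum>d\<in>UNIV. Gam x b d c * xi x $ d)"

definition nab2 :: "'n::finite conn \<Rightarrow> (real^'n \<Rightarrow> real^'n) \<Rightarrow> real^'n \<Rightarrow> 'n \<Rightarrow> 'n \<Rightarrow> 'n \<Rightarrow> real" where
  "nab2 Gam xi x a b c = pd a (\<lambda>y. nab1 Gam xi y b c) x
     - (\<Sum>e\<in>UNIV. Gam x a b e * nab1 Gam xi x e c)
     + (\<Sum>e\<in>UNIV. Gam x a e c * nab1 Gam xi x b e)"

text \<open>R_{ab}^c_d, so that R_{ab}^c_d xi^d = (nabla_a nabla_b - nabla_b nabla_a) xi^c\<close>
definition curv :: "'n::finite conn \<Rightarrow> real^'n \<Rightarrow> 'n \<Rightarrow> 'n \<Rightarrow> 'n \<Rightarrow> 'n \<Rightarrow> real" where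
  "curv Gam x a b c d = pd a (\<lambda>y. Gam y b d c) x - pd b (\<lambda>y. Gam y a d c) x
     + (\<Sum>e\<in>UNIV. Gam x a e c * Gam x b d e - Gam x b e c * Gam x a d e)"

definition ric :: "'n::finite conn \<Rightarrow> real^'n \<Rightarrow> 'n \<Rightarrow> 'n \<Rightarrow> real" where
  "ric Gam x b d = (\<Sum>c\<in>UNIV. curv Gam x c b c d)"

text \<open>the n of the paper: dimension = n + 1\<close>
definition nn :: "'n::finite itself \<Rightarrow> real" where
  "nn _ = real CARD('n) - 1"

definition rho :: "'n::finite conn \<Rightarrow> real^'n \<Rightarrow> 'n \<Rightarrow> 'n \<Rightarrow> real" where
  "rho Gam x a b = ((nn TYPE('n) + 1) * ric Gam x a b + ric Gam x b a)
                    / (nn TYPE('n) * (nn TYPE('n) + 2))"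

definition weyl :: "'n::finite conn \<Rightarrow> real^'n \<Rightarrow> 'n \<Rightarrow> 'n \<Rightarrow> 'n \<Rightarrow> 'n \<Rightarrow> real" where
  "weyl Gam x a b c d = curv Gam x a b c d - kd c a * rho Gam x b d + kd c b * rho Gam x a d
      + (rho Gam x a b - rho Gam x b a) * kd c d"

definition nabrho :: "'n::finite conn \<Rightarrow> real^'n \<Rightarrow> 'n \<Rightarrow> 'n \<Rightarrow> 'n \<Rightarrow> real" where
  "nabrho Gam x a b c = pd a (\<lambda>y. rho Gam y b c) x
     - (\<Sum>e\<in>UNIV. Gam x a b e * rho Gam x e c) - (\<Sum>e\<in>UNIV. Gam x a c e * rho Gam x b e)"

definition cotton :: "'n::finite conn \<Rightarrow> real^'n \<Rightarrow> 'n \<Rightarrow> 'n \<Rightarrow> 'n \<Rightarrow> real" where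
  "cotton Gam x a b c = nabrho Gam x a b c - nabrho Gam x b a c"

text \<open>trace-free part of a tensor T_{ab}^c symmetric in a b (upper index last)\<close>
definition tracefree :: "('n::finite \<Rightarrow> 'n \<Rightarrow> 'n \<Rightarrow> real) \<Rightarrow> 'n \<Rightarrow> 'n \<Rightarrow> 'n \<Rightarrow> real" where
  "tracefree T a b c = T a b c
     - (kd c a * (\<Sum>d\<in>UNIV. T b d d) + kd c b * (\<Sum>d\<in>UNIV. T a d d)) / (nn TYPE('n) + 2)"

definition Sop :: "'n::finite conn \<Rightarrow> (real^'n \<Rightarrow> real^'n) \<Rightarrow> real^'n \<Rightarrow> 'n \<Rightarrow> 'n \<Rightarrow> 'n \<Rightarrow> real" where
  "Sop Gam xi x a b c = (nab2 Gam xi x a b c + nab2 Gam xi x b a c) / 2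
      + (rho Gam x a b + rho Gam x b a) / 2 * xi x $ c"

text \<open>D^A(xi)_a^c_b, stored as (a b c)\<close>
definition DA :: "'n::finite conn \<Rightarrow> (real^'n \<Rightarrow> real^'n) \<Rightarrow> real^'n \<Rightarrow> 'n \<Rightarrow> 'n \<Rightarrow> 'n \<Rightarrow> real" where
  "DA Gam xi x a b c = Sop Gam xi x a b c
     - ((\<Sum>d\<in>UNIV. Sop Gam xi x a d d) * kd c b + (\<Sum>d\<in>UNIV. Sop Gam xi x b d d) * kd c a)
        / (nn TYPE('n) + 2)"

text \<open>W_{d(a}^c_{b)} xi^d, stored as (a b c)\<close>
definition Wsym :: "'n::finite conn \<Rightarrow> (real^'n \<Rightarrow> real^'n) \<Rightarrow> real^'n \<Rightarrow> 'n \<Rightarrow> 'n \<Rightarrow> 'n \<Rightarrow> real" where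
  "Wsym Gam xi x a b c = (\<Sum>d\<in>UNIV. (weyl Gam x d a c b + weyl Gam x d b c a) / 2 * xi x $ d)"

definition Dsym :: "'n::finite conn \<Rightarrow> (real^'n \<Rightarrow> real^'n) \<Rightarrow> real^'n \<Rightarrow> 'n \<Rightarrow> 'n \<Rightarrow> 'n \<Rightarrow> real" where
  "Dsym Gam xi x = tracefree (\<lambda>a b c. Sop Gam xi x a b c + Wsym Gam xi x a b c)"

definition lieconn :: "'n::finite conn \<Rightarrow> (real^'n \<Rightarrow> real^'n) \<Rightarrow> real^'n \<Rightarrow> 'n \<Rightarrow> 'n \<Rightarrow> 'n \<Rightarrow> real" where
  "lieconn Gam xi x a b c = pd a (\<lambda>y. pd b (\<lambda>z. xi z $ c) y) x
     + (\<Sum>e\<in>UNIV. xi x $ e * pd e (\<lambda>y. Gam y a b c) x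
                 - Gam x a b e * pd e (\<lambda>y. xi y $ c) x
                 + Gam x e b c * pd a (\<lambda>y. xi y $ e) x
                 + Gam x a e c * pd b (\<lambda>y. xi y $ e) x)"

definition proj_symmetry :: "(real^'n::finite) set \<Rightarrow> 'n conn \<Rightarrow> (real^'n \<Rightarrow> real^'n) \<Rightarrow> bool" where
  "proj_symmetry U Gam xi \<longleftrightarrow> (\<forall>x\<in>U. tracefree (lieconn Gam xi x) = (\<lambda>a b c. 0))"

definition normal_sol :: "(real^'n::finite) set \<Rightarrow> 'n conn \<Rightarrow> (real^'n \<Rightarrow> real^'n) \<Rightarrow> bool" where
  "normal_sol U Gam xi \<longleftrightarrow> (\<forall>x\<in>U. DA Gam xi x = (\<lambda>a b c. 0)
      \<and> (\<forall>a b c. (\<Sum>d\<in>UNIV. weyl Gam x a b c d * xi x $ d) = 0)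
      \<and> (\<forall>a b. (\<Sum>d\<in>UNIV. cotton Gam x a b d * xi x $ d) = 0))"

end

theory Submission
  imports Defs
begin


definition hasd :: "'n::finite \<Rightarrow> (real^'n \<Rightarrow> real) \<Rightarrow> real^'n \<Rightarrow> real \<Rightarrow> bool" where
  "hasd a f x F \<longleftrightarrow> ((\<lambda>t. f (x + t *\<^sub>R axis a 1)) has_real_derivative F) (at 0)"

lemma hasd_pd: "hasd a f x F \<Longrightarrow> pd a f x = F"
  unfolding hasd_def pd_def by (rule DERIV_imp_deriv)

lemma diff_hasd: "(\<lambda>t. f (x + t *\<^sub>R axis a 1)) differentiable (at 0) \<Longrightarrow> hasd a f x (pd a f x)"
  unfolding hasd_def pd_def using DERIV_deriv_iff_real_differentiable by blast

lemma pd_DERIV: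
  assumes "(\<lambda>t. f (y + s0 *\<^sub>R axis a 1 + t *\<^sub>R axis a 1)) differentiable (at 0)"
  shows "((\<lambda>s. f (y + s *\<^sub>R axis a 1)) has_real_derivative pd a f (y + s0 *\<^sub>R axis a 1)) (at s0)"
proof -
  let ?g = "\<lambda>t. f (y + s0 *\<^sub>R axis a 1 + t *\<^sub>R axis a 1)"
  have "(?g has_real_derivative pd a f (y + s0 *\<^sub>R axis a 1)) (at 0)"
    using assms unfolding pd_def using DERIV_deriv_iff_real_differentiable by blast
  then have "(?g has_real_derivative pd a f (y + s0 *\<^sub>R axis a 1)) (at (s0 + - s0))" by simp
  then have "((\<lambda>s. ?g (s + - s0)) has_real_derivative pd a f (y + s0 *\<^sub>R axis a 1)) (at s0)"
    using DERIV_shift[of ?g "pd a f (y + s0 *\<^sub>R axis a 1)" s0 "- s0"] by simp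
  moreover have "(\<lambda>s. ?g (s + - s0)) = (\<lambda>s. f (y + s *\<^sub>R axis a 1))"
    by (auto simp: algebra_simps)
  ultimately show ?thesis by simp
qed

lemma pd_cong:
  assumes "open U" "x \<in> U" "\<And>y. y \<in> U \<Longrightarrow> f y = g y"
  shows "pd a f x = pd a g x"
proof -
  obtain r where r: "r > 0" "ball x r \<subseteq> U" using assms openE by blast
  have "\<forall>\<^sub>F t in nhds 0. f (x + t *\<^sub>R axis a 1) = g (x + t *\<^sub>R axis a 1)"
    unfolding eventually_nhds_metric
  proof (intro exI[of _ r] conjI allI impI)
    fix t :: real assume "dist t 0 < r"
    then have "x + t *\<^sub>R axis a 1 \<in> ball x r" by (simp add: dist_norm norm_axis_1)
    then show "f (x + t *\<^sub>R axis a 1) = g (x + t *\<^sub>R axis a 1)" using r assms(3) by blast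
  qed (use r in auto)
  then show ?thesis unfolding pd_def by (rule deriv_cong_ev) simp
qed

lemma smooth_pd:
  assumes "smooth_fun U f" "x \<in> U"
  shows "hasd a f x (pd a f x)" "hasd a (pd b f) x (pd a (pd b f) x)"
  using assms unfolding smooth_fun_def
  by (auto intro!: diff_hasd dest: spec[of _ "[]"] spec[of _ "[b]"])

lemma smooth_diffs:
  assumes "smooth_fun U f" "y \<in> U"
  shows "(\<lambda>t. f (y + t *\<^sub>R axis c 1)) differentiable (at 0)"
    "(\<lambda>t. pd a f (y + t *\<^sub>R axis c 1)) differentiable (at 0)"
  using assms unfolding smooth_fun_def by (auto dest: spec[of _ "[]"] spec[of _ "[a]"])

lemma mvt2d:
  assumes U: "open U" "smooth_fun U f" and r: "r > 0" "ball x r \<subseteq> U"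
    and h: "0 < h" "h < r / 2"
  shows "\<exists>\<sigma> \<tau>. 0 < \<sigma> \<and> \<sigma> < h \<and> 0 < \<tau> \<and> \<tau> < h \<and>
     f (x + h *\<^sub>R axis b 1 + h *\<^sub>R axis a 1) - f (x + h *\<^sub>R axis a 1) - f (x + h *\<^sub>R axis b 1) + f x
     = h^2 * pd b (pd a f) (x + \<sigma> *\<^sub>R axis a 1 + \<tau> *\<^sub>R axis b 1)"
proof -
  let ?e1 = "axis a 1 :: real^'a" and ?e2 = "axis b 1 :: real^'a"
  have inU: "x + s *\<^sub>R ?e1 + t *\<^sub>R ?e2 \<in> U" if "\<bar>s\<bar> \<le> h" "\<bar>t\<bar> \<le> h" for s t
  proof -
    have "norm (s *\<^sub>R ?e1 + t *\<^sub>R ?e2) \<le> \<bar>s\<bar> + \<bar>t\<bar>"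
      using norm_triangle_ineq[of "s *\<^sub>R ?e1" "t *\<^sub>R ?e2"] by (simp add: norm_axis_1)
    then have "dist (x + s *\<^sub>R ?e1 + t *\<^sub>R ?e2) x < r" using that h
      by (simp add: dist_norm)
    then show ?thesis using r by (auto simp: dist_commute)
  qed
  define \<phi> where "\<phi> s = f (x + h *\<^sub>R ?e2 + s *\<^sub>R ?e1) - f (x + s *\<^sub>R ?e1)" for s
  have "\<exists>z>0. z < h \<and> \<phi> h - \<phi> 0 = (h - 0) *
      (pd a f (x + h *\<^sub>R ?e2 + z *\<^sub>R ?e1) - pd a f (x + z *\<^sub>R ?e1))"
    unfolding \<phi>_def
  proof (rule MVT2[OF h(1)])
    fix s assume s: "0 \<le> s" "s \<le> h"
    have i1: "x + h *\<^sub>R ?e2 + s *\<^sub>R ?e1 \<in> U" using inU[of s h] s h by (simp add: algebra_simps)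
    have i2: "x + s *\<^sub>R ?e1 \<in> U" using inU[of s 0] s h by simp
    show "((\<lambda>s. f (x + h *\<^sub>R ?e2 + s *\<^sub>R ?e1) - f (x + s *\<^sub>R ?e1)) has_real_derivative
        pd a f (x + h *\<^sub>R ?e2 + s *\<^sub>R ?e1) - pd a f (x + s *\<^sub>R ?e1)) (at s)"
      by (intro DERIV_diff pd_DERIV smooth_diffs[OF U(2)] i1 i2)
  qed
  then obtain \<sigma> where \<sigma>: "0 < \<sigma>" "\<sigma> < h" and eq1: "\<phi> h - \<phi> 0 = h *
      (pd a f (x + h *\<^sub>R ?e2 + \<sigma> *\<^sub>R ?e1) - pd a f (x + \<sigma> *\<^sub>R ?e1))" by auto
  have "\<exists>z>0. z < h \<and> pd a f (x + \<sigma> *\<^sub>R ?e1 + h *\<^sub>R ?e2) - pd a f (x + \<sigma> *\<^sub>R ?e1 + 0 *\<^sub>R ?e2)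
      = (h - 0) * pd b (pd a f) (x + \<sigma> *\<^sub>R ?e1 + z *\<^sub>R ?e2)"
  proof (rule MVT2[OF h(1)])
    fix t assume t: "0 \<le> t" "t \<le> h"
    have i1: "x + \<sigma> *\<^sub>R ?e1 + t *\<^sub>R ?e2 \<in> U" using inU[of \<sigma> t] t \<sigma> by simp
    show "((\<lambda>t. pd a f (x + \<sigma> *\<^sub>R ?e1 + t *\<^sub>R ?e2)) has_real_derivative
        pd b (pd a f) (x + \<sigma> *\<^sub>R ?e1 + t *\<^sub>R ?e2)) (at t)"
      by (intro pd_DERIV smooth_diffs[OF U(2)] i1)
  qed
  then obtain \<tau> where \<tau>: "0 < \<tau>" "\<tau> < h" and eq2: "pd a f (x + \<sigma> *\<^sub>R ?e1 + h *\<^sub>R ?e2) - pd a f (x + \<sigma> *\<^sub>R ?e1)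
      = h * pd b (pd a f) (x + \<sigma> *\<^sub>R ?e1 + \<tau> *\<^sub>R ?e2)" by auto
  have "f (x + h *\<^sub>R ?e2 + h *\<^sub>R ?e1) - f (x + h *\<^sub>R ?e1) - f (x + h *\<^sub>R ?e2) + f x = \<phi> h - \<phi> 0"
    unfolding \<phi>_def by simp
  also have "\<dots> = h^2 * pd b (pd a f) (x + \<sigma> *\<^sub>R ?e1 + \<tau> *\<^sub>R ?e2)"
    using eq1 eq2 by (simp add: algebra_simps power2_eq_square)
  finally show ?thesis using \<sigma> \<tau> by blast
qed

lemma abs_contra: "\<bar>(p::real) - a\<bar> < \<bar>a - b\<bar> / 2 \<Longrightarrow> \<bar>p - b\<bar> < \<bar>a - b\<bar> / 2 \<Longrightarrow> False"
  by (smt (verit) abs_triangle_ineq field_sum_of_halves)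

lemma schwarz:
  assumes U: "open U" "smooth_fun U f" and x: "x \<in> U"
  shows "pd a (pd b f) x = pd b (pd a f) x"
proof (rule ccontr)
  let ?A = "pd b (pd a f) x" and ?B = "pd a (pd b f) x"
  assume ne: "?B \<noteq> ?A"
  define \<epsilon> where "\<epsilon> = \<bar>?A - ?B\<bar> / 2"
  have \<epsilon>: "\<epsilon> > 0" using ne by (simp add: \<epsilon>_def)
  have c1: "continuous_on U (pd b (pd a f))" and c2: "continuous_on U (pd a (pd b f))"
    using U(2) unfolding smooth_fun_def by (metis pds.simps)+
  then have "isCont (pd b (pd a f)) x" "isCont (pd a (pd b f)) x"
    using U(1) x continuous_on_eq_continuous_at by blast+
  then obtain d1 d2 where d1: "d1 > 0" "\<And>y. dist y x < d1 \<Longrightarrow> dist (pd b (pd a f) y) ?A < \<epsilon>"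
    and d2: "d2 > 0" "\<And>y. dist y x < d2 \<Longrightarrow> dist (pd a (pd b f) y) ?B < \<epsilon>"
    using \<epsilon> unfolding continuous_at_eps_delta by metis
  obtain r where r: "r > 0" "ball x r \<subseteq> U" using U x openE by blast
  define h where "h = min (r/4) (min (d1/4) (d2/4))"
  have h: "0 < h" "h < r/2" using r d1 d2 by (auto simp: h_def)
  have near: "dist (x + s *\<^sub>R axis i 1 + t *\<^sub>R axis j 1) x < 2 * h" if "0 < s" "s < h" "0 < t" "t < h"
    for s t and i j :: 'a
  proof -
    have "norm (s *\<^sub>R axis i 1 + t *\<^sub>R (axis j 1 :: real^'a)) \<le> \<bar>s\<bar> + \<bar>t\<bar>"
      using norm_triangle_ineq[of "s *\<^sub>R axis i 1" "t *\<^sub>R (axis j 1 :: real^'a)"] by (simp add: norm_axis_1)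
    then show ?thesis using that by (simp add: dist_norm)
  qed
  obtain \<sigma> \<tau> where st: "0 < \<sigma>" "\<sigma> < h" "0 < \<tau>" "\<tau> < h" and E1:
     "f (x + h *\<^sub>R axis b 1 + h *\<^sub>R axis a 1) - f (x + h *\<^sub>R axis a 1) - f (x + h *\<^sub>R axis b 1) + f x
     = h^2 * pd b (pd a f) (x + \<sigma> *\<^sub>R axis a 1 + \<tau> *\<^sub>R axis b 1)"
    using mvt2d[OF U r h, of b a] by blast
  obtain \<sigma>' \<tau>' where st': "0 < \<sigma>'" "\<sigma>' < h" "0 < \<tau>'" "\<tau>' < h" and E2:
     "f (x + h *\<^sub>R axis a 1 + h *\<^sub>R axis b 1) - f (x + h *\<^sub>R axis b 1) - f (x + h *\<^sub>R axis a 1) + f x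
     = h^2 * pd a (pd b f) (x + \<sigma>' *\<^sub>R axis b 1 + \<tau>' *\<^sub>R axis a 1)"
    using mvt2d[OF U r h, of a b] by blast
  have "pd b (pd a f) (x + \<sigma> *\<^sub>R axis a 1 + \<tau> *\<^sub>R axis b 1) = pd a (pd b f) (x + \<sigma>' *\<^sub>R axis b 1 + \<tau>' *\<^sub>R axis a 1)"
    using E1 E2 h by (simp add: algebra_simps)
  moreover have "dist (pd b (pd a f) (x + \<sigma> *\<^sub>R axis a 1 + \<tau> *\<^sub>R axis b 1)) ?A < \<epsilon>"
  proof -
    have "dist (x + \<sigma> *\<^sub>R axis a 1 + \<tau> *\<^sub>R axis b 1) x < 2 * h"
      using near[OF st, of a b] .
    moreover have "2 * h < d1" using d1 r by (auto simp: h_def min_def)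
    ultimately have "dist (x + \<sigma> *\<^sub>R axis a 1 + \<tau> *\<^sub>R axis b 1) x < d1" by linarith
    then show ?thesis using d1 by blast
  qed
  moreover have "dist (pd a (pd b f) (x + \<sigma>' *\<^sub>R axis b 1 + \<tau>' *\<^sub>R axis a 1)) ?B < \<epsilon>"
  proof -
    have "dist (x + \<sigma>' *\<^sub>R axis b 1 + \<tau>' *\<^sub>R axis a 1) x < 2 * h"
      using near[OF st', of b a] .
    moreover have "2 * h < d2" using d2 r by (auto simp: h_def min_def)
    ultimately have "dist (x + \<sigma>' *\<^sub>R axis b 1 + \<tau>' *\<^sub>R axis a 1) x < d2" by linarith
    then show ?thesis using d2 by blast
  qed
  ultimately show False unfolding \<epsilon>_def dist_real_def using abs_contra by metis
qed

lemma kd_mult[simp]: "kd c d * X = (if c = d then X else 0)" "X * kd c d = (if c = d then X else 0)"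
  by (auto simp: kd_def)
lemma kd_same[simp]: "kd c c = 1" by (simp add: kd_def)
lemma mult_if0[simp]: "a * (if P then x else 0) = (if P then a * x else (0::real))"
  "(if P then x else 0) * a = (if P then x * a else (0::real))"
  "(if P then x else 0) / a = (if P then x / a else (0::real))"
  by auto

lemma sum_if_const: "(\<Sum>d\<in>A. if P then f d else (0::real)) = (if P then (\<Sum>d\<in>A. f d) else 0)"
  by auto

lemma nn2: "nn TYPE('n::finite) + 2 = real CARD('n) + 1" "nn TYPE('n) + 2 \<noteq> 0"
  by (auto simp: nn_def)

lemma tracefree_shift:
  "tracefree (\<lambda>a b c. T a b c + kd c a * u b + kd c b * u a) = tracefree (T :: 'n::finite \<Rightarrow> _)"
proof (intro ext)
  fix a b c :: 'n
  have tr: "(\<Sum>d\<in>UNIV. T p d d + kd d p * u d + kd d d * u p) = (\<Sum>d\<in>UNIV. T p d d) + (real CARD('n) + 1) * u p" for p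
    by (simp add: sum.distrib algebra_simps)
  show "tracefree (\<lambda>a b c. T a b c + kd c a * u b + kd c b * u a) a b c = tracefree T a b c"
    unfolding tracefree_def tr using nn2[where 'n='n]
    by (simp add: kd_def field_simps nn_def)
qed

lemma hasd_D: "hasd a f x F \<Longrightarrow> ((\<lambda>t. f (x + t *\<^sub>R axis a 1)) has_real_derivative F) (at 0)"
  by (simp add: hasd_def)

lemma pd_nab1:
  assumes dG: "\<And>p q r. (\<lambda>t. Gam (x + t *\<^sub>R axis a 1) p q r) differentiable (at 0)"
    and sv: "smooth_vf U xi" "x \<in> U"
  shows "pd a (\<lambda>y. nab1 Gam xi y b c) x = pd a (\<lambda>y. pd b (\<lambda>z. xi z $ c) y) x
    + (\<Sum>d\<in>UNIV. pd a (\<lambda>y. Gam y b d c) x * xi x $ d + Gam x b d c * pd a (\<lambda>y. xi y $ d) x)"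
proof (rule hasd_pd)
  have h1: "hasd a (pd b (\<lambda>z. xi z $ c)) x (pd a (pd b (\<lambda>z. xi z $ c)) x)"
    using sv unfolding smooth_vf_def by (intro smooth_pd) auto
  have h2: "hasd a (\<lambda>y. xi y $ d) x (pd a (\<lambda>y. xi y $ d) x)" for d
    using sv unfolding smooth_vf_def by (intro smooth_pd) auto
  have h3: "hasd a (\<lambda>y. Gam y p q r) x (pd a (\<lambda>y. Gam y p q r) x)" for p q r
    using dG by (intro diff_hasd) 
  show "hasd a (\<lambda>y. nab1 Gam xi y b c) x (pd a (\<lambda>y. pd b (\<lambda>z. xi z $ c) y) x
    + (\<Sum>d\<in>UNIV. pd a (\<lambda>y. Gam y b d c) x * xi x $ d + Gam x b d c * pd a (\<lambda>y. xi y $ d) x))"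
    unfolding hasd_def nab1_def
    apply (rule DERIV_add)
    using h1 apply (simp add: hasd_def)
    apply (rule DERIV_sum)
    apply (rule DERIV_cong)
     apply (rule DERIV_mult[OF hasd_D[OF h3] hasd_D[OF h2]])
    by simp
qed

lemma tf_facts:
  assumes "open U" "x \<in> U" "torsion_free U Gam"
  shows "\<And>p q r. Gam x p q r = Gam x q p r"
    "\<And>e p q r. pd e (\<lambda>y. Gam y p q r) x = pd e (\<lambda>y. Gam y q p r) x"
  using assms unfolding torsion_free_def by (auto intro!: pd_cong[OF assms(1,2)])

lemma lie_nab2:
  assumes U: "open U" "x \<in> U" "torsion_free U Gam"
    and dG: "\<And>a p q r. (\<lambda>t. Gam (x + t *\<^sub>R axis a 1) p q r) differentiable (at 0)"
    and sv: "smooth_vf U xi"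
  shows "lieconn Gam xi x a b c = nab2 Gam xi x a b c + (\<Sum>d\<in>UNIV. curv Gam x d a c b * xi x $ d)"
proof -
  note tf = tf_facts[OF U]
  have s1: "(\<Sum>e\<in>UNIV. \<Sum>n\<in>UNIV. xi x $ n * (Gam x e n c * Gam x a b e)) =
     (\<Sum>d\<in>UNIV. \<Sum>n\<in>UNIV. xi x $ d * (Gam x d n c * Gam x a b n))"
    by (subst sum.swap) (simp add: tf)
  have s2: "(\<Sum>d\<in>UNIV. \<Sum>n\<in>UNIV. xi x $ d * (Gam x d b n * Gam x n a c)) =
     (\<Sum>e\<in>UNIV. \<Sum>n\<in>UNIV. xi x $ n * (Gam x e a c * Gam x n b e))"
    by (subst sum.swap) (simp add: ac_simps)
  show ?thesis
    unfolding nab2_def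
    unfolding pd_nab1[OF dG sv(1) U(2)]
    unfolding lieconn_def curv_def nab1_def
    apply (simp add: sum.distrib sum_subtractf sum_distrib_left sum_distrib_right algebra_simps tf)
    apply (simp add: s1 s2)
    done
qed

lemma lie_sym:
  assumes U: "open U" "x \<in> U" "torsion_free U Gam" and sv: "smooth_vf U xi"
  shows "lieconn Gam xi x a b c = lieconn Gam xi x b a c"
proof -
  note tf = tf_facts[OF U]
  have sc: "pd a (pd b (\<lambda>z. xi z $ c)) x = pd b (pd a (\<lambda>z. xi z $ c)) x"
    using sv U unfolding smooth_vf_def by (intro schwarz) auto
  show ?thesis unfolding lieconn_def sc
    by (simp add: tf sum.distrib algebra_simps)
qed

lemma key:
  assumes U: "open U" "x \<in> U" "torsion_free U Gam"
    and dG: "\<And>a p q r. (\<lambda>t. Gam (x + t *\<^sub>R axis a 1) p q r) differentiable (at 0)"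
    and sv: "smooth_vf U xi"
  shows "tracefree (lieconn Gam xi x) = Dsym Gam xi x"
proof -
  define u where "u b = - (\<Sum>d\<in>UNIV. (2 * rho Gam x d b - rho Gam x b d) * xi x $ d) / 2" for b
  have "lieconn Gam xi x = (\<lambda>a b c. (Sop Gam xi x a b c + Wsym Gam xi x a b c) + kd c a * u b + kd c b * u a)"
  proof (intro ext)
    fix a b c
    have e1: "(\<Sum>d\<in>UNIV. xi x $ d * (rho Gam x p d / 2)) = (\<Sum>n\<in>UNIV. xi x $ n * rho Gam x p n / 2)" for p
      by simp
    have e2: "(\<Sum>d\<in>UNIV. xi x $ d * (2 * rho Gam x d p / 2)) = (\<Sum>n\<in>UNIV. xi x $ n * rho Gam x n p)" for p
      by simp
    have "lieconn Gam xi x a b c = (lieconn Gam xi x a b c + lieconn Gam xi x b a c) / 2"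
      using lie_sym[OF U sv, of a b c] by simp
    also have "\<dots> = (Sop Gam xi x a b c + Wsym Gam xi x a b c) + kd c a * u b + kd c b * u a"
      unfolding lie_nab2[OF U dG sv] Sop_def Wsym_def weyl_def u_def
      apply (simp add: sum.distrib sum_subtractf sum_divide_distrib sum_distrib_left sum_distrib_right
          algebra_simps add_divide_distrib diff_divide_distrib)
      apply (simp only: sum_if_const e1 e2)
      done
    finally show "lieconn Gam xi x a b c = (Sop Gam xi x a b c + Wsym Gam xi x a b c) + kd c a * u b + kd c b * u a" .
  qed
  then show ?thesis unfolding Dsym_def
    using tracefree_shift[of "\<lambda>a b c. Sop Gam xi x a b c + Wsym Gam xi x a b c" u] by simp
qed

lemma curv_antisym: "curv Gam x a b c d = - curv Gam x b a c d"
  unfolding curv_def by (simp add: sum_subtractf algebra_simps)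

lemma weyl_antisym: "weyl Gam x a b c d = - weyl Gam x b a c d"
  unfolding weyl_def using curv_antisym[of Gam x a b c d] by (simp add: kd_def algebra_simps)

lemma curv_trace:
  assumes U: "open U" "x \<in> U" "torsion_free U Gam"
  shows "(\<Sum>c\<in>UNIV. curv Gam x a b c c) = ric Gam x b a - ric Gam x a b"
proof -
  note tf = tf_facts[OF U]
  show ?thesis unfolding ric_def curv_def
    by (simp add: sum.distrib sum_subtractf tf algebra_simps)
qed

lemma curv_bianchi:
  assumes U: "open U" "x \<in> U" "torsion_free U Gam"
  shows "curv Gam x d a c b + curv Gam x a b c d + curv Gam x b d c a = 0"
proof -
  note tf = tf_facts[OF U]
  show ?thesis unfolding curv_def
    by (simp add: sum.distrib sum_subtractf tf algebra_simps)
qed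

lemma weyl_bianchi:
  assumes U: "open U" "x \<in> U" "torsion_free U Gam"
  shows "weyl Gam x d a c b + weyl Gam x a b c d + weyl Gam x b d c a = 0"
  using curv_bianchi[OF U, of d a c b] unfolding weyl_def by (simp del: kd_mult add: algebra_simps)

lemma rho_rel:
  assumes "CARD('n::finite) \<ge> 2"
  shows "real CARD('n) * rho (Gam::'n conn) x a d - rho Gam x d a = ric Gam x a d"
    "(real CARD('n) + 1) * (rho Gam x a b - rho Gam x b a) = ric Gam x a b - ric Gam x b a"
proof -
  have N: "real CARD('n) \<ge> 2" using assms by simp
  have nn: "nn TYPE('n) = real CARD('n) - 1" by (simp add: nn_def)
  define M where "M = real CARD('n)"
  have d: "(M - 1) * (M + 1) \<noteq> 0" using N by (simp add: M_def)
  have r: "rho Gam x p q = (M * ric Gam x p q + ric Gam x q p) / ((M - 1) * (M + 1))" for p q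
    unfolding rho_def nn M_def by simp
  have "M * rho (Gam::'n conn) x a d - rho Gam x d a
     = (M * (M * ric Gam x a d + ric Gam x d a) - (M * ric Gam x d a + ric Gam x a d)) / ((M - 1) * (M + 1))"
    unfolding r by (simp add: diff_divide_distrib)
  also have "\<dots> = ((M - 1) * (M + 1)) * ric Gam x a d / ((M - 1) * (M + 1))"
    by (rule arg_cong[where f="\<lambda>t. t / _"]) (simp add: algebra_simps)
  also have "\<dots> = ric Gam x a d" using d by simp
  finally show "real CARD('n) * rho (Gam::'n conn) x a d - rho Gam x d a = ric Gam x a d" by (simp add: M_def)
  have "(M + 1) * (rho Gam x a b - rho Gam x b a)
     = (M + 1) * ((M * ric Gam x a b + ric Gam x b a) - (M * ric Gam x b a + ric Gam x a b)) / ((M - 1) * (M + 1))"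
    unfolding r by (simp only: diff_divide_distrib[symmetric] times_divide_eq_right)
  also have "\<dots> = ((M - 1) * (M + 1)) * (ric Gam x a b - ric Gam x b a) / ((M - 1) * (M + 1))"
    by (rule arg_cong[where f="\<lambda>t. t / _"]) (simp add: algebra_simps)
  also have "\<dots> = ric Gam x a b - ric Gam x b a" using d by simp
  finally show "(real CARD('n) + 1) * (rho Gam x a b - rho Gam x b a) = ric Gam x a b - ric Gam x b a" by (simp add: M_def)
qed

lemma weyl_trace1:
  assumes U: "open U" "x \<in> U" "torsion_free U Gam" and N: "CARD('n::finite) \<ge> 2"
  shows "(\<Sum>c\<in>UNIV. weyl (Gam::'n conn) x a c c d) = 0"
proof -
  have "(\<Sum>c\<in>UNIV. curv Gam x a c c d) = - ric Gam x a d"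
    unfolding ric_def by (subst curv_antisym) (simp add: sum_negf)
  then show ?thesis unfolding weyl_def using rho_rel(1)[OF N, of Gam x a d]
    by (simp add: sum.distrib sum_subtractf algebra_simps)
qed

lemma weyl_trace2:
  assumes U: "open U" "x \<in> U" "torsion_free U Gam" and N: "CARD('n::finite) \<ge> 2"
  shows "(\<Sum>c\<in>UNIV. weyl (Gam::'n conn) x a b c c) = 0"
  unfolding weyl_def using curv_trace[OF U, of a b] rho_rel(2)[OF N, of Gam x a b]
  by (simp add: sum.distrib sum_subtractf algebra_simps)

lemma part1:
  assumes U: "open U" "x \<in> U" "torsion_free U Gam" and N: "CARD('n::finite) \<ge> 2"
  shows "Dsym (Gam::'n conn) xi x = (\<lambda>a b c. DA Gam xi x a b c + Wsym Gam xi x a b c)"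
proof -
  have tr: "(\<Sum>d\<in>UNIV. Wsym Gam xi x p d d) = 0" for p
    unfolding Wsym_def
  proof (subst sum.swap, rule sum.neutral, rule ballI)
    fix e
    have "(\<Sum>d\<in>UNIV. (weyl Gam x e p d d + weyl Gam x e d d p) / 2 * xi x $ e)
       = ((\<Sum>d\<in>UNIV. weyl Gam x e p d d) + (\<Sum>d\<in>UNIV. weyl Gam x e d d p)) / 2 * xi x $ e"
      by (simp only: sum_distrib_right[symmetric] sum_divide_distrib[symmetric] sum.distrib)
    then show "(\<Sum>d\<in>UNIV. (weyl Gam x e p d d + weyl Gam x e d d p) / 2 * xi x $ e) = 0"
      using weyl_trace1[OF U N] weyl_trace2[OF U N] by simp
  qed
  show ?thesis unfolding Dsym_def tracefree_def DA_def
    by (intro ext) (simp add: sum.distrib tr del: kd_mult)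
qed

lemma pd_proj:
  assumes dG: "\<And>p q r. (\<lambda>t. Gam (x + t *\<^sub>R axis e 1) p q r) differentiable (at 0)"
    and dU: "\<And>p. (\<lambda>t. Ups (x + t *\<^sub>R axis e 1) p) differentiable (at 0)"
  shows "pd e (\<lambda>y. projchange Gam Ups y a b c) x = pd e (\<lambda>y. Gam y a b c) x
     + kd c a * pd e (\<lambda>y. Ups y b) x + kd c b * pd e (\<lambda>y. Ups y a) x"
proof (rule hasd_pd)
  have h1: "hasd e (\<lambda>y. Gam y p q r) x (pd e (\<lambda>y. Gam y p q r) x)" for p q r
    using dG by (intro diff_hasd)
  have h2: "hasd e (\<lambda>y. Ups y p) x (pd e (\<lambda>y. Ups y p) x)" for p
    using dU by (intro diff_hasd)
  show "hasd e (\<lambda>y. projchange Gam Ups y a b c) x (pd e (\<lambda>y. Gam y a b c) x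
     + kd c a * pd e (\<lambda>y. Ups y b) x + kd c b * pd e (\<lambda>y. Ups y a) x)"
    unfolding projchange_def hasd_def
    by (intro DERIV_add DERIV_cmult hasd_D h1 h2)
qed

lemma lie_proj:
  assumes dG: "\<And>e p q r. (\<lambda>t. Gam (x + t *\<^sub>R axis e 1) p q r) differentiable (at 0)"
    and dU: "\<And>e p. (\<lambda>t. Ups (x + t *\<^sub>R axis e 1) p) differentiable (at 0)"
  shows "lieconn (projchange Gam Ups) xi x = (\<lambda>a b c. lieconn Gam xi x a b c
     + kd c a * (\<Sum>e\<in>UNIV. xi x $ e * pd e (\<lambda>y. Ups y b) x + Ups x e * pd b (\<lambda>y. xi y $ e) x)
     + kd c b * (\<Sum>e\<in>UNIV. xi x $ e * pd e (\<lambda>y. Ups y a) x + Ups x e * pd a (\<lambda>y. xi y $ e) x))"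
proof (intro ext)
  fix a b c
  show "lieconn (projchange Gam Ups) xi x a b c = lieconn Gam xi x a b c
     + kd c a * (\<Sum>e\<in>UNIV. xi x $ e * pd e (\<lambda>y. Ups y b) x + Ups x e * pd b (\<lambda>y. xi y $ e) x)
     + kd c b * (\<Sum>e\<in>UNIV. xi x $ e * pd e (\<lambda>y. Ups y a) x + Ups x e * pd a (\<lambda>y. xi y $ e) x)"
    unfolding lieconn_def pd_proj[OF dG dU]
    unfolding projchange_def
    by (simp add: sum.distrib sum_subtractf algebra_simps sum_distrib_left kd_def sum_if_const)
qed


theorem theorem4p4:
  fixes U :: "(real^'n::finite) set"
    and Gam :: "'n conn" and Ups :: "real^'n \<Rightarrow> 'n \<Rightarrow> real"
    and xi :: "real^'n \<Rightarrow> real^'n"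
  assumes "CARD('n) \<ge> 2"
    and "open U"
    and "smooth_conn U Gam" and "torsion_free U Gam"
    and "\<forall>a. smooth_fun U (\<lambda>x. Ups x a)"
    and "smooth_vf U xi"
  shows "(\<forall>x\<in>U. Dsym Gam xi x = (\<lambda>a b c. DA Gam xi x a b c + Wsym Gam xi x a b c))
    \<and> (\<forall>x\<in>U. Dsym (projchange Gam Ups) xi x = Dsym Gam xi x)
    \<and> (proj_symmetry U Gam xi \<longleftrightarrow> (\<forall>x\<in>U. Dsym Gam xi x = (\<lambda>a b c. 0)))
    \<and> ((\<forall>x\<in>U. DA Gam xi x = (\<lambda>a b c. 0)) \<longrightarrow>
        (proj_symmetry U Gam xi \<longleftrightarrow> (\<forall>x\<in>U. Wsym Gam xi x = (\<lambda>a b c. 0))))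
    \<and> (normal_sol U Gam xi \<longrightarrow>
        (proj_symmetry U Gam xi \<longleftrightarrow>
          (\<forall>x\<in>U. \<forall>a b c. (\<Sum>d\<in>UNIV. weyl Gam x d a c b * xi x $ d) = 0)))"
  proof -
  note U = assms(2)
  have dG: "(\<lambda>t. Gam (x + t *\<^sub>R axis e 1) p q r) differentiable (at 0)" if "x \<in> U" for x e p q r
    using smooth_diffs(1)[of U "\<lambda>x. Gam x p q r" x e] assms(3) that unfolding smooth_conn_def by auto
  have dU: "(\<lambda>t. Ups (x + t *\<^sub>R axis e 1) p) differentiable (at 0)" if "x \<in> U" for x e p
    using smooth_diffs(1)[of U "\<lambda>x. Ups x p" x e] assms(5) that by auto
  have dG': "(\<lambda>t. projchange Gam Ups (x + t *\<^sub>R axis e 1) p q r) differentiable (at 0)" if "x \<in> U" for x e p q r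
    unfolding projchange_def using dG[OF that] dU[OF that]
    by (intro differentiable_add differentiable_mult differentiable_const) auto
  have tf': "torsion_free U (projchange Gam Ups)"
    using assms(4) unfolding torsion_free_def projchange_def by (simp add: algebra_simps)
  have K: "tracefree (lieconn Gam xi x) = Dsym Gam xi x" if "x \<in> U" for x
    using key[OF U that assms(4) dG[OF that] assms(6)] .
  have K': "tracefree (lieconn (projchange Gam Ups) xi x) = Dsym (projchange Gam Ups) xi x" if "x \<in> U" for x
    using key[OF U that tf' dG'[OF that] assms(6)] .
  have P1: "\<forall>x\<in>U. Dsym Gam xi x = (\<lambda>a b c. DA Gam xi x a b c + Wsym Gam xi x a b c)"
    using part1[OF U _ assms(4) assms(1)] by blast
  have P2: "\<forall>x\<in>U. Dsym (projchange Gam Ups) xi x = Dsym Gam xi x"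
  proof
    fix x assume x: "x \<in> U"
    show "Dsym (projchange Gam Ups) xi x = Dsym Gam xi x"
      unfolding K'[OF x, symmetric] K[OF x, symmetric] lie_proj[OF dG[OF x] dU[OF x]]
      by (rule tracefree_shift)
  qed
  have P3: "proj_symmetry U Gam xi \<longleftrightarrow> (\<forall>x\<in>U. Dsym Gam xi x = (\<lambda>a b c. 0))"
    unfolding proj_symmetry_def using K by auto
  have P4: "(\<forall>x\<in>U. DA Gam xi x = (\<lambda>a b c. 0)) \<longrightarrow>
        (proj_symmetry U Gam xi \<longleftrightarrow> (\<forall>x\<in>U. Wsym Gam xi x = (\<lambda>a b c. 0)))"
  proof
    assume DA: "\<forall>x\<in>U. DA Gam xi x = (\<lambda>a b c. 0)"
    have "Dsym Gam xi x = Wsym Gam xi x" if "x \<in> U" for x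
      using P1 DA that by (auto simp: fun_eq_iff)
    then show "proj_symmetry U Gam xi \<longleftrightarrow> (\<forall>x\<in>U. Wsym Gam xi x = (\<lambda>a b c. 0))"
      using P3 by auto
  qed
  have P5: "normal_sol U Gam xi \<longrightarrow>
        (proj_symmetry U Gam xi \<longleftrightarrow>
          (\<forall>x\<in>U. \<forall>a b c. (\<Sum>d\<in>UNIV. weyl Gam x d a c b * xi x $ d) = 0))"
  proof
    assume ns: "normal_sol U Gam xi"
    have W: "Wsym Gam xi x a b c = (\<Sum>d\<in>UNIV. weyl Gam x d a c b * xi x $ d)" if x: "x \<in> U" for x a b c
    proof -
      have z: "(\<Sum>d\<in>UNIV. weyl Gam x a b c d * xi x $ d) = 0" using ns x unfolding normal_sol_def by blast
      have "(\<Sum>d\<in>UNIV. (weyl Gam x d a c b + weyl Gam x a b c d + weyl Gam x b d c a) * xi x $ d) = 0"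
        using weyl_bianchi[OF U x assms(4)] by simp
      then have "(\<Sum>d\<in>UNIV. weyl Gam x d a c b * xi x $ d) + (\<Sum>d\<in>UNIV. weyl Gam x a b c d * xi x $ d)
          - (\<Sum>d\<in>UNIV. weyl Gam x d b c a * xi x $ d) = 0"
        using weyl_antisym[of Gam x b _ c a]
        by (simp add: sum.distrib sum_subtractf algebra_simps)
      then have sy: "(\<Sum>d\<in>UNIV. weyl Gam x d b c a * xi x $ d) = (\<Sum>d\<in>UNIV. weyl Gam x d a c b * xi x $ d)"
        using z by simp
      have "Wsym Gam xi x a b c = ((\<Sum>d\<in>UNIV. weyl Gam x d a c b * xi x $ d) + (\<Sum>d\<in>UNIV. weyl Gam x d b c a * xi x $ d)) / 2"
        unfolding Wsym_def
      proof -
        have "(\<Sum>d\<in>UNIV. (weyl Gam x d a c b + weyl Gam x d b c a) / 2 * xi x $ d)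
           = (\<Sum>d\<in>UNIV. (weyl Gam x d a c b * xi x $ d + weyl Gam x d b c a * xi x $ d) / 2)"
          by (rule sum.cong) (simp_all add: distrib_right)
        also have "\<dots> = ((\<Sum>d\<in>UNIV. weyl Gam x d a c b * xi x $ d) + (\<Sum>d\<in>UNIV. weyl Gam x d b c a * xi x $ d)) / 2"
          by (simp only: sum_divide_distrib[symmetric] sum.distrib)
        finally show "(\<Sum>d\<in>UNIV. (weyl Gam x d a c b + weyl Gam x d b c a) / 2 * xi x $ d)
           = ((\<Sum>d\<in>UNIV. weyl Gam x d a c b * xi x $ d) + (\<Sum>d\<in>UNIV. weyl Gam x d b c a * xi x $ d)) / 2" .
      qed
      then show ?thesis using sy by simp
    qed
    have DA: "\<forall>x\<in>U. DA Gam xi x = (\<lambda>a b c. 0)" using ns unfolding normal_sol_def by blast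
    show "proj_symmetry U Gam xi \<longleftrightarrow>
          (\<forall>x\<in>U. \<forall>a b c. (\<Sum>d\<in>UNIV. weyl Gam x d a c b * xi x $ d) = 0)"
      using P4 DA W by (auto simp: fun_eq_iff)
  qed
  show ?thesis using P1 P2 P3 P4 P5 by blast
qed

end
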